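(* Let $E$ be a directed graph, $S=M(\mathbb{Z},I)\cup\{0\}$, $w$ a canonical weight mapping on $E$, and $e$ a nonzero idempotent of $S$. Let $S_E=\{s\in S\setminus\{0\}:\ w(\mu)=s \text{ for some } \mu\in E^*\}$ and $S_e=\{s\in S_E: ss^{-1}=e\}$, and for $s,t\in S_e$ put $s\le t$ iff every path of weight $t$ contains an initial subpath of weight $s$. Then $S_e$ is a directed set with respect to $\le$.
   Context: Directed graph $E=(E^0,E^1,\mathrm{r},\mathrm{s})$; $E^*$ is the set of paths (finite sequences $\alpha_1\cdots\alpha_k$ of edges with $\mathrm{r}(\alpha_i)=\mathrm{s}(\alpha_{i+1})$, vertices being paths of length $0$); initial subpaths of $\alpha_1\cdots\alpha_k$ are $\mathrm{s}(\alpha_1)$ and $\alpha_1\cdots\alpha_m$, $m\le k$. $M(\mathbb{Z},I)=I\times\mathbb{Z}\times I$ with $(i,a,j)(k,b,l)=(i,a+b,l)$ if $j=k$, else undefined; $S=M(\mathbb{Z},I)\cup\{0\}$ with undefined products $0$, $0$ absorbing; $(i,a,j)^{-1}=(j,-a,i)$. Canonical weight mapping: each vertex gets weight $(i,0,i)$, each edge weight $(i,1,j)$, $w(\mathrm{s}(\alpha))w(\alpha)=w(\alpha)=w(\alpha)w(\mathrm{r}(\alpha))$; for each nonzero idempotent $f$ all edges whose source has weight $f$ have the same weight and all edges whose range has weight $f$ have the same weight; $w(\alpha_1\cdots\alpha_k)=w(\alpha_1)\cdots w(\alpha_k)$. A directed set is a set with a reflexive transitive relation in which any two elements have an upper bound.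 *)

theory Defs
  imports Main
begin

text \<open>The semigroup S = M(Z,I) \<union> {0}: None is 0, Some (i,a,j) is (i,a,j).
  The index set I is the type 'i.\<close>

type_synonym 'i S = "('i \<times> int \<times> 'i) option"

fun smult :: "'i S \<Rightarrow> 'i S \<Rightarrow> 'i S" where
  "smult (Some (i, a, j)) (Some (k, b, l)) = (if j = k then Some (i, a + b, l) else None)"
| "smult _ _ = None"

definition sinv :: "'i S \<Rightarrow> 'i S" where
  "sinv x = map_option (\<lambda>(i, a, j). (j, - a, i)) x"

definition nonzero_idempotent :: "'i S \<Rightarrow> bool" where
  "nonzero_idempotent f \<longleftrightarrow> f \<noteq> None \<and> smult f f = f"

text \<open>Directed graph E = (E0, E1, r, s). A path is represented as a pair (v, es):
  a vertex path is (v, []); an edge path alpha_1...alpha_k is (s(alpha_1), [alpha_1,...,alpha_k]).\<close>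

definition graph :: "'v set \<Rightarrow> 'e set \<Rightarrow> ('e \<Rightarrow> 'v) \<Rightarrow> ('e \<Rightarrow> 'v) \<Rightarrow> bool" where
  "graph E0 E1 r s \<longleftrightarrow> r ` E1 \<subseteq> E0 \<and> s ` E1 \<subseteq> E0"

definition is_path :: "'v set \<Rightarrow> 'e set \<Rightarrow> ('e \<Rightarrow> 'v) \<Rightarrow> ('e \<Rightarrow> 'v) \<Rightarrow> 'v \<times> 'e list \<Rightarrow> bool" where
  "is_path E0 E1 r s p \<longleftrightarrow>
     fst p \<in> E0 \<and> set (snd p) \<subseteq> E1 \<and>
     (snd p \<noteq> [] \<longrightarrow> s (hd (snd p)) = fst p) \<and>
     (\<forall>i. Suc i < length (snd p) \<longrightarrow> r (snd p ! i) = s (snd p ! Suc i))"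

definition initial_subpath :: "'v \<times> 'e list \<Rightarrow> 'v \<times> 'e list \<Rightarrow> bool" where
  "initial_subpath q p \<longleftrightarrow> (\<exists>m \<le> length (snd p). q = (fst p, take m (snd p)))"

fun sprod :: "'i S list \<Rightarrow> 'i S" where
  "sprod [] = None"
| "sprod [x] = x"
| "sprod (x # y # xs) = smult x (sprod (y # xs))"

definition path_weight :: "('v \<Rightarrow> 'i S) \<Rightarrow> ('e \<Rightarrow> 'i S) \<Rightarrow> 'v \<times> 'e list \<Rightarrow> 'i S" where
  "path_weight wv we p = (if snd p = [] then wv (fst p) else sprod (map we (snd p)))"

definition canonical_weight ::
  "'v set \<Rightarrow> 'e set \<Rightarrow> ('e \<Rightarrow> 'v) \<Rightarrow> ('e \<Rightarrow> 'v) \<Rightarrow> ('v \<Rightarrow> 'i S) \<Rightarrow> ('e \<Rightarrow> 'i S) \<Rightarrow> bool" where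
  "canonical_weight E0 E1 r s wv we \<longleftrightarrow>
     (\<forall>v\<in>E0. \<exists>i. wv v = Some (i, 0, i)) \<and>
     (\<forall>\<alpha>\<in>E1. \<exists>i j. we \<alpha> = Some (i, 1, j)) \<and>
     (\<forall>\<alpha>\<in>E1. smult (wv (s \<alpha>)) (we \<alpha>) = we \<alpha> \<and> we \<alpha> = smult (we \<alpha>) (wv (r \<alpha>))) \<and>
     (\<forall>f. nonzero_idempotent f \<longrightarrow>
        (\<forall>\<alpha>\<in>E1. \<forall>\<beta>\<in>E1. wv (s \<alpha>) = f \<and> wv (s \<beta>) = f \<longrightarrow> we \<alpha> = we \<beta>) \<and>
        (\<forall>\<alpha>\<in>E1. \<forall>\<beta>\<in>E1. wv (r \<alpha>) = f \<and> wv (r \<beta>) = f \<longrightarrow> we \<alpha> = we \<beta>))"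

definition S_E :: "'v set \<Rightarrow> 'e set \<Rightarrow> ('e \<Rightarrow> 'v) \<Rightarrow> ('e \<Rightarrow> 'v) \<Rightarrow> ('v \<Rightarrow> 'i S) \<Rightarrow> ('e \<Rightarrow> 'i S) \<Rightarrow> 'i S set" where
  "S_E E0 E1 r s wv we = {t. t \<noteq> None \<and> (\<exists>\<mu>. is_path E0 E1 r s \<mu> \<and> path_weight wv we \<mu> = t)}"

definition S_idem :: "'v set \<Rightarrow> 'e set \<Rightarrow> ('e \<Rightarrow> 'v) \<Rightarrow> ('e \<Rightarrow> 'v) \<Rightarrow> ('v \<Rightarrow> 'i S) \<Rightarrow> ('e \<Rightarrow> 'i S) \<Rightarrow> 'i S \<Rightarrow> 'i S set" where
  "S_idem E0 E1 r s wv we e = {t \<in> S_E E0 E1 r s wv we. smult t (sinv t) = e}"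

definition weight_le :: "'v set \<Rightarrow> 'e set \<Rightarrow> ('e \<Rightarrow> 'v) \<Rightarrow> ('e \<Rightarrow> 'v) \<Rightarrow> ('v \<Rightarrow> 'i S) \<Rightarrow> ('e \<Rightarrow> 'i S) \<Rightarrow> 'i S \<Rightarrow> 'i S \<Rightarrow> bool" where
  "weight_le E0 E1 r s wv we a b \<longleftrightarrow>
     (\<forall>p. is_path E0 E1 r s p \<and> path_weight wv we p = b \<longrightarrow>
        (\<exists>q. initial_subpath q p \<and> path_weight wv we q = a))"

definition directed_set :: "'a set \<Rightarrow> ('a \<Rightarrow> 'a \<Rightarrow> bool) \<Rightarrow> bool" where
  "directed_set A R \<longleftrightarrow>
     (\<forall>x\<in>A. R x x) \<and>
     (\<forall>x\<in>A. \<forall>y\<in>A. \<forall>z\<in>A. R x y \<and> R y z \<longrightarrow> R x z) \<and>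
     (\<forall>x\<in>A. \<forall>y\<in>A. \<exists>z\<in>A. R x z \<and> R y z)"

end

theory Submission
  imports Defs
begin

lemma pw_cons:
  assumes "smult (we a) (wv (r a)) = we a"
  shows "path_weight wv we (v, a # rest) = smult (we a) (path_weight wv we (r a, rest))"
  using assms by (cases rest) (auto simp: path_weight_def)

lemma is_path_cons:
  assumes "graph E0 E1 r s" "is_path E0 E1 r s (v, a # rest)"
  shows "is_path E0 E1 r s (r a, rest) \<and> s a = v \<and> a \<in> E1"
proof -
  have a: "a \<in> E1" "s a = v" using assms(2) by (auto simp: is_path_def)
  have "r a \<in> E0" using assms(1) a by (auto simp: graph_def)
  moreover have "set rest \<subseteq> E1" using assms(2) by (auto simp: is_path_def)
  moreover have "rest \<noteq> [] \<longrightarrow> s (hd rest) = r a"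
  proof
    assume "rest \<noteq> []"
    then have "Suc 0 < length (a # rest)" by simp
    then have "r ((a#rest) ! 0) = s ((a#rest) ! Suc 0)" using assms(2) unfolding is_path_def
      by (metis snd_conv)
    then show "s (hd rest) = r a" using \<open>rest \<noteq> []\<close> by (cases rest) auto
  qed
  moreover have "\<forall>i. Suc i < length rest \<longrightarrow> r (rest ! i) = s (rest ! Suc i)"
  proof (intro allI impI)
    fix i assume "Suc i < length rest"
    then have "Suc (Suc i) < length (a # rest)" by simp
    then have "r ((a#rest) ! Suc i) = s ((a#rest) ! Suc (Suc i))" using assms(2) unfolding is_path_def
      by (metis snd_conv)
    then show "r (rest ! i) = s (rest ! Suc i)" by simp
  qed
  ultimately show ?thesis using a by (simp add: is_path_def)
qed

lemma cw_facts:
  assumes "canonical_weight E0 E1 r s wv we" "a \<in> E1"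
  shows "\<exists>i j. we a = Some (i, 1, j) \<and> wv (s a) = Some (i, 0, i) \<and> wv (r a) = Some (j, 0, j)
        \<and> smult (we a) (wv (r a)) = we a"
proof -
  obtain i j where w: "we a = Some (i, 1, j)" using assms unfolding canonical_weight_def by blast
  have h1: "smult (wv (s a)) (we a) = we a" and h2: "we a = smult (we a) (wv (r a))"
    using assms unfolding canonical_weight_def by auto
  have "wv (s a) = Some (i, 0, i)"
  proof (cases "wv (s a)")
    case None then show ?thesis using h1 w by simp
  next
    case (Some x) then obtain p c q where "x = (p, c, q)" by (cases x) auto
    then show ?thesis using h1 w Some by (auto split: if_splits)
  qed
  moreover have "wv (r a) = Some (j, 0, j)"
  proof (cases "wv (r a)")
    case None then show ?thesis using h2 w by simp
  next
    case (Some x) then obtain p c q where "x = (p, c, q)" by (cases x) auto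
    then show ?thesis using h2 w Some by (auto split: if_splits)
  qed
  ultimately show ?thesis using w h2 by auto
qed

lemma lemA:
  assumes g: "graph E0 E1 r s" and cw: "canonical_weight E0 E1 r s wv we"
  shows "is_path E0 E1 r s (v, es) \<Longrightarrow>
    \<exists>i j. wv v = Some (i, 0, i) \<and> path_weight wv we (v, es) = Some (i, int (length es), j)"
proof (induction es arbitrary: v)
  case Nil
  then have "v \<in> E0" by (simp add: is_path_def)
  then obtain i where "wv v = Some (i, 0, i)" using cw unfolding canonical_weight_def by blast
  then show ?case by (simp add: path_weight_def)
next
  case (Cons a rest)
  from is_path_cons[OF g Cons.prems] have p: "is_path E0 E1 r s (r a, rest)" "s a = v" "a \<in> E1"
    by auto
  obtain i j where c: "we a = Some (i, 1, j)" "wv (s a) = Some (i, 0, i)" "wv (r a) = Some (j, 0, j)"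
    "smult (we a) (wv (r a)) = we a" using cw_facts[OF cw p(3)] by blast
  obtain k l where ih: "wv (r a) = Some (k, 0, k)" "path_weight wv we (r a, rest) = Some (k, int (length rest), l)"
    using Cons.IH[OF p(1)] by blast
  have "k = j" using ih c by simp
  then show ?case using pw_cons[of we a wv r v rest, OF c(4)] c ih p(2) by auto
qed

lemma lemB:
  assumes g: "graph E0 E1 r s" and cw: "canonical_weight E0 E1 r s wv we"
  shows "is_path E0 E1 r s (v, es) \<Longrightarrow> is_path E0 E1 r s (v', es') \<Longrightarrow> length es = length es'
    \<Longrightarrow> wv v = wv v' \<Longrightarrow> path_weight wv we (v, es) = path_weight wv we (v', es')"
proof (induction es arbitrary: v v' es')
  case Nil
  then show ?case by (simp add: path_weight_def)
next
  case (Cons a rest)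
  then obtain b rest' where es': "es' = b # rest'" by (cases es') auto
  from is_path_cons[OF g Cons.prems(1)] have p: "is_path E0 E1 r s (r a, rest)" "s a = v" "a \<in> E1"
    by auto
  from is_path_cons[OF g Cons.prems(2)[unfolded es']] have p': "is_path E0 E1 r s (r b, rest')" "s b = v'" "b \<in> E1"
    by auto
  obtain i j where c: "we a = Some (i, 1, j)" "wv (s a) = Some (i, 0, i)" "wv (r a) = Some (j, 0, j)"
    "smult (we a) (wv (r a)) = we a" using cw_facts[OF cw p(3)] by blast
  obtain i' j' where c': "we b = Some (i', 1, j')" "wv (s b) = Some (i', 0, i')" "wv (r b) = Some (j', 0, j')"
    "smult (we b) (wv (r b)) = we b" using cw_facts[OF cw p'(3)] by blast
  have ni: "nonzero_idempotent (wv v)" using c p by (simp add: nonzero_idempotent_def)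
  have eq: "we a = we b" using cw ni p p' Cons.prems(4) unfolding canonical_weight_def by metis
  then have "wv (r a) = wv (r b)" using c c' by simp
  then have "path_weight wv we (r a, rest) = path_weight wv we (r b, rest')"
    using Cons.IH[OF p(1) p'(1)] Cons.prems(3) es' by simp
  then show ?case using pw_cons[of we a wv r v rest, OF c(4)] pw_cons[of we b wv r v' rest', OF c'(4)] eq es'
    by simp
qed

lemma take_path:
  assumes "is_path E0 E1 r s (v, es)"
  shows "is_path E0 E1 r s (v, take m es)"
  using assms unfolding is_path_def
  by (auto dest: in_set_takeD simp: hd_take)

lemma S_idem_form:
  assumes g: "graph E0 E1 r s" and cw: "canonical_weight E0 E1 r s wv we"
    and x: "x \<in> S_idem E0 E1 r s wv we e"
  shows "\<exists>v es j i. is_path E0 E1 r s (v, es) \<and> path_weight wv we (v, es) = x \<and>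
       wv v = Some (i, 0, i) \<and> x = Some (i, int (length es), j) \<and> e = Some (i, 0, i)"
proof -
  from x obtain \<mu> where mu: "is_path E0 E1 r s \<mu>" "path_weight wv we \<mu> = x" "smult x (sinv x) = e"
    unfolding S_idem_def S_E_def by auto
  obtain v es where "\<mu> = (v, es)" by (cases \<mu>)
  with lemA[OF g cw] mu obtain i j where "wv v = Some (i, 0, i)" "x = Some (i, int (length es), j)"
    by force
  with mu \<open>\<mu> = (v, es)\<close> show ?thesis by (auto simp: sinv_def)
qed

lemma le_lemma:
  assumes g: "graph E0 E1 r s" and cw: "canonical_weight E0 E1 r s wv we"
    and x: "x \<in> S_idem E0 E1 r s wv we e" and y: "y \<in> S_idem E0 E1 r s wv we e"
    and lx: "is_path E0 E1 r s (v, es)" "path_weight wv we (v, es) = x"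
    and ly: "is_path E0 E1 r s (v', es')" "path_weight wv we (v', es') = y"
    and len: "length es \<le> length es'"
  shows "weight_le E0 E1 r s wv we x y"
  unfolding weight_le_def
proof (intro allI impI, elim conjE)
  fix p assume p: "is_path E0 E1 r s p" "path_weight wv we p = y"
  obtain u fs where pu: "p = (u, fs)" by (cases p)
  obtain i j where ex: "wv v = Some (i, 0, i)" "x = Some (i, int (length es), j)"
    using lemA[OF g cw lx(1)] lx(2) by auto
  obtain i' j' where ey: "wv v' = Some (i', 0, i')" "y = Some (i', int (length es'), j')"
    using lemA[OF g cw ly(1)] ly(2) by auto
  obtain i'' j'' where ep: "wv u = Some (i'', 0, i'')" "y = Some (i'', int (length fs), j'')"
    using lemA[OF g cw p(1)[unfolded pu]] p(2) pu by auto
  obtain k where ek: "e = Some (k,0,k)" "x = Some (k, int (length es), j)"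
    using S_idem_form[OF g cw x] ex by auto
  obtain k' j2 where ek': "e = Some (k',0,k')" "y = Some (k', int (length es'), j2)"
    using S_idem_form[OF g cw y] ey by auto
  have "k = i" using ek ex by simp
  have "k' = i''" "length fs = length es'" using ek' ep by auto
  then have wu: "wv u = wv v" using ek ek' ex ep \<open>k = i\<close> by simp
  define q where "q = (u, take (length es) fs)"
  have "initial_subpath q p" unfolding initial_subpath_def q_def pu using len \<open>length fs = length es'\<close>
    by auto
  moreover have "path_weight wv we q = x"
    unfolding q_def
    using lemB[OF g cw take_path[OF p(1)[unfolded pu]] lx(1)] len \<open>length fs = length es'\<close> wu lx(2)
    by simp
  ultimately show "\<exists>q. initial_subpath q p \<and> path_weight wv we q = x" by blast
qed

theorem lemma5p7:
  fixes E0 :: "'v set" and E1 :: "'e set" and r s :: "'e \<Rightarrow> 'v"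
    and wv :: "'v \<Rightarrow> 'i S" and we :: "'e \<Rightarrow> 'i S" and e :: "'i S"
  assumes "graph E0 E1 r s"
    and "canonical_weight E0 E1 r s wv we"
    and "nonzero_idempotent e"
  shows "directed_set (S_idem E0 E1 r s wv we e) (weight_le E0 E1 r s wv we)"
  unfolding directed_set_def
proof (intro conjI ballI impI)
  fix x assume "x \<in> S_idem E0 E1 r s wv we e"
  show "weight_le E0 E1 r s wv we x x" unfolding weight_le_def initial_subpath_def
    by (metis order_refl prod.collapse take_all)
next
  fix x y z assume "x \<in> S_idem E0 E1 r s wv we e" "y \<in> S_idem E0 E1 r s wv we e"
    "z \<in> S_idem E0 E1 r s wv we e"
    and h: "weight_le E0 E1 r s wv we x y \<and> weight_le E0 E1 r s wv we y z"
  show "weight_le E0 E1 r s wv we x z" unfolding weight_le_def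
  proof (intro allI impI)
    fix p assume p: "is_path E0 E1 r s p \<and> path_weight wv we p = z"
    then obtain q where q: "initial_subpath q p" "path_weight wv we q = y"
      using h unfolding weight_le_def by blast
    then obtain m where m: "m \<le> length (snd p)" "q = (fst p, take m (snd p))"
      unfolding initial_subpath_def by blast
    have "is_path E0 E1 r s q" using take_path[of E0 E1 r s "fst p" "snd p" m] p m by simp
    then obtain q' where q': "initial_subpath q' q" "path_weight wv we q' = x"
      using h q unfolding weight_le_def by blast
    then obtain m' where "m' \<le> length (snd q)" "q' = (fst q, take m' (snd q))"
      unfolding initial_subpath_def by blast
    then have "initial_subpath q' p" using m unfolding initial_subpath_def
      by (auto intro!: exI[of _ "min m' m"] simp: min_def)
    then show "\<exists>q. initial_subpath q p \<and> path_weight wv we q = x" using q' by blast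
  qed
next
  fix x y assume x: "x \<in> S_idem E0 E1 r s wv we e" and y: "y \<in> S_idem E0 E1 r s wv we e"
  obtain v es j i where X: "is_path E0 E1 r s (v, es)" "path_weight wv we (v, es) = x"
    using S_idem_form[OF assms(1,2) x] by blast
  obtain v' es' where Y: "is_path E0 E1 r s (v', es')" "path_weight wv we (v', es') = y"
    using S_idem_form[OF assms(1,2) y] by blast
  show "\<exists>z\<in>S_idem E0 E1 r s wv we e. weight_le E0 E1 r s wv we x z \<and> weight_le E0 E1 r s wv we y z"
  proof (cases "length es \<le> length es'")
    case True
    have "weight_le E0 E1 r s wv we y y" unfolding weight_le_def initial_subpath_def
      by (metis order_refl prod.collapse take_all)
    then show ?thesis using le_lemma[OF assms(1,2) x y X Y True] y by blast
  next
    case False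
    have "weight_le E0 E1 r s wv we x x" unfolding weight_le_def initial_subpath_def
      by (metis order_refl prod.collapse take_all)
    then show ?thesis using le_lemma[OF assms(1,2) y x Y X] False x by fastforce
  qed
qed

end
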